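(* Let $a$ be a real number. The inequality $S_{n,a}(x)>0$ holds for all integers $n\ge1$ and all real $x\in(0,\pi)$ if and only if $a\ge1$.
   Context: For a real number $a$ and integers $0\le m$, $\binom{m+a}{m}=\frac{(a+1)(a+2)\cdots(a+m)}{m!}$ (equal to $1$ when $m=0$). For an integer $n\ge1$, $S_{n,a}(x)=\sum_{j=1}^n\binom{n+a-j}{n-j}\sin(jx)$. *)

theory Defs
  imports Complex_Main
begin

text \<open>Generalized binomial coefficient binom(m+a, m) = (a+1)(a+2)...(a+m)/m!, equal to 1 for m = 0.\<close>
definition binom_shift :: "nat \<Rightarrow> real \<Rightarrow> real" where
  "binom_shift m a = (\<Prod>i=1..m. (a + real i)) / fact m"

definition S :: "nat \<Rightarrow> real \<Rightarrow> real \<Rightarrow> real" where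
  "S n a x = (\<Sum>j=1..n. binom_shift (n - j) a * sin (real j * x))"

end

theory Submission
  imports Defs
begin

lemma prod_shift1: "(\<Prod>i=1..Suc m. (a - 1 + real i)) = a * (\<Prod>i=1..m. (a + real i))"
  by (induction m) (auto simp: algebra_simps)

lemma c_step: "binom_shift (Suc m) a = binom_shift m a + binom_shift (Suc m) (a-1)"
proof -
  define P where "P = (\<Prod>i=1..m. (a + real i))"
  have f: "fact (Suc m) = (real m + 1) * (fact m :: real)" by (simp add: algebra_simps)
  have fp: "(fact m :: real) > 0" by simp
  have A: "binom_shift (Suc m) a = P * (a + real m + 1) / fact (Suc m)"
    unfolding binom_shift_def P_def by (simp add: algebra_simps)
  have B: "binom_shift (Suc m) (a-1) = a * P / fact (Suc m)"
    unfolding binom_shift_def P_def using prod_shift1[where m=m and a=a] by simp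
  have C: "binom_shift m a = P / fact m" unfolding binom_shift_def P_def by simp
  have nz: "(real m + 1) * fact m \<noteq> (0::real)" using fp by simp
  show ?thesis unfolding A B C f using fp nz
    by (simp add: divide_simps) (simp add: algebra_simps)
qed

lemma c0: "binom_shift 0 a = 1" by (simp add: binom_shift_def)

lemma hockey: "binom_shift m a = (\<Sum>k\<le>m. binom_shift k (a-1))"
proof (induction m arbitrary: a)
  case 0 then show ?case by (simp add: c0)
next
  case (Suc m)
  show ?case using c_step[of m a] Suc[of a] by simp
qed

lemma vand: "binom_shift m a = (\<Sum>k\<le>m. binom_shift k (a-2) * (real (m-k) + 1))"
proof (induction m)
  case 0 then show ?case by (simp add: c0)
next
  case (Suc m)
  have h: "binom_shift (Suc m) (a-1) = (\<Sum>k\<le>Suc m. binom_shift k (a-2))"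
    using hockey[of "Suc m" "a-1"] by simp
  have "(\<Sum>k\<le>Suc m. binom_shift k (a-2) * (real (Suc m-k) + 1))
      = (\<Sum>k\<le>m. binom_shift k (a-2) * (real (m-k) + 1 + 1)) + binom_shift (Suc m) (a-2)"
    by (simp add: Suc_diff_le)
  also have "\<dots> = (\<Sum>k\<le>m. binom_shift k (a-2) * (real (m-k) + 1)) + (\<Sum>k\<le>Suc m. binom_shift k (a-2))"
  proof -
    have "(\<Sum>k\<le>m. binom_shift k (a-2) * (real (m-k) + 1 + 1)) = (\<Sum>k\<le>m. binom_shift k (a-2) * (real (m-k) + 1)) + (\<Sum>k\<le>m. binom_shift k (a-2))"
      by (subst sum.distrib[symmetric], rule sum.cong) (simp_all add: algebra_simps)
    then show ?thesis by simp
  qed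
  finally show ?case using Suc h c_step[of m a] by simp
qed

lemma c_zero: "binom_shift k 0 = 1"
  by (induction k) (auto simp: binom_shift_def)

lemma c_one: "binom_shift k 1 = real k + 1"
proof (induction k)
  case 0 then show ?case by (simp add: c0)
next
  case (Suc k)
  show ?case using c_step[of k 1] Suc c_zero[of "Suc k"] by simp
qed

lemma D_closed: "(2 - 2 * cos x) * (\<Sum>j=1..k. sin (real j * x)) = sin x + sin (real k * x) - sin ((real k + 1) * x)"
proof (induction k)
  case 0 then show ?case by simp
next
  case (Suc k)
  have e1: "sin ((real k + 1 + 1) * x) = sin ((real k + 1) * x) * cos x + cos ((real k + 1) * x) * sin x"
    using sin_add[of "(real k + 1) * x" x] by (simp add: algebra_simps)
  have e2: "sin (real k * x) = sin ((real k + 1) * x) * cos x - cos ((real k + 1) * x) * sin x"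
    using sin_diff[of "(real k + 1) * x" x] by (simp add: algebra_simps)
  show ?case using Suc e1 e2 by (simp add: algebra_simps)
qed

lemma S1_form: "S m 1 x = (\<Sum>j=1..m. (real (m-j) + 1) * sin (real j * x))"
  unfolding S_def c_one by simp

lemma F_closed: "(2 - 2 * cos x) * S m 1 x = (real m + 1) * sin x - sin ((real m + 1) * x)"
proof (induction m)
  case 0 then show ?case by (simp add: S_def)
next
  case (Suc m)
  have "S (Suc m) 1 x = S m 1 x + (\<Sum>j=1..Suc m. sin (real j * x))"
  proof -
    have "S (Suc m) 1 x = (\<Sum>j=1..m. (real (m-j) + 1 + 1) * sin (real j * x)) + sin (real (Suc m) * x)"
      unfolding S1_form by (simp add: Suc_diff_le)
    also have "\<dots> = S m 1 x + (\<Sum>j=1..Suc m. sin (real j * x))"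
      unfolding S1_form by (simp add: sum.distrib[symmetric] ring_distribs)
    finally show ?thesis .
  qed
  then show ?case using Suc D_closed[of x "Suc m"] by (simp add: algebra_simps)
qed

lemma sin_mult_le: "\<bar>sin (real n * x)\<bar> \<le> real n * \<bar>sin x\<bar>"
proof (induction n)
  case 0 then show ?case by simp
next
  case (Suc n)
  have "sin (real (Suc n) * x) = sin (real n * x) * cos x + cos (real n * x) * sin x"
    using sin_add[of "real n * x" x] by (simp add: algebra_simps)
  then have "\<bar>sin (real (Suc n) * x)\<bar> \<le> \<bar>sin (real n * x)\<bar> * \<bar>cos x\<bar> + \<bar>cos (real n * x)\<bar> * \<bar>sin x\<bar>"
    by (metis abs_mult abs_triangle_ineq)
  also have "\<dots> \<le> real n * \<bar>sin x\<bar> * 1 + 1 * \<bar>sin x\<bar>"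
    by (intro add_mono mult_mono) (use Suc in auto)
  finally show ?case by (simp add: algebra_simps)
qed

lemma F_pos:
  assumes "m \<ge> 1" "0 < x" "x < pi"
  shows "S m 1 x > 0"
proof -
  have s: "sin x > 0" using assms sin_gt_zero by auto
  have c: "\<bar>cos x\<bar> < 1"
  proof -
    have "sin x ^ 2 + cos x ^ 2 = 1" by simp
    then have "cos x ^ 2 < 1" using s by (smt (verit) zero_less_power)
    then show ?thesis by (simp add: abs_square_less_1)
  qed
  have "sin ((real m + 1) * x) = sin (real m * x) * cos x + cos (real m * x) * sin x"
    using sin_add[of "real m * x" x] by (simp add: algebra_simps)
  then have "sin ((real m + 1) * x) \<le> \<bar>sin (real m * x)\<bar> * \<bar>cos x\<bar> + \<bar>cos (real m * x)\<bar> * \<bar>sin x\<bar>"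
    by (metis abs_ge_self abs_mult abs_triangle_ineq order_trans)
  also have "\<dots> \<le> real m * sin x * \<bar>cos x\<bar> + sin x"
    using s sin_mult_le[of m x] by (intro add_mono mult_mono) auto
  also have "\<dots> < real m * sin x + sin x"
    using s c assms(1) by (simp add: mult_strict_left_mono)
  finally have "(real m + 1) * sin x - sin ((real m + 1) * x) > 0" by (simp add: algebra_simps)
  moreover have "2 - 2 * cos x > 0" using c by auto
  ultimately have "(2 - 2 * cos x) * S m 1 x > 0" using F_closed[of x m] by simp
  then show ?thesis using \<open>2 - 2 * cos x > 0\<close> zero_less_mult_pos by blast
qed

lemma conv: "S n a x = (\<Sum>k<n. binom_shift k (a-2) * S (n-k) 1 x)"
proof -
  define g where "g j k = binom_shift k (a-2) * (real (n-j-k) + 1) * sin (real j * x)" for j k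
  have "S n a x = (\<Sum>j=1..n. \<Sum>k\<le>n-j. g j k)"
    unfolding S_def g_def vand[of "n - _" a] by (simp add: sum_distrib_right)
  also have "\<dots> = (\<Sum>j\<in>{1..n}. \<Sum>k\<in>{k. k \<in> {..<n} \<and> j + k \<le> n}. g j k)"
    by (intro sum.cong refl) (auto intro: sum.cong)
  also have "\<dots> = (\<Sum>k\<in>{..<n}. \<Sum>j\<in>{j. j \<in> {1..n} \<and> j + k \<le> n}. g j k)"
    by (rule sum.swap_restrict) auto
  also have "\<dots> = (\<Sum>k<n. \<Sum>j=1..n-k. g j k)"
    by (intro sum.cong refl) (auto intro: sum.cong)
  also have "\<dots> = (\<Sum>k<n. binom_shift k (a-2) * S (n-k) 1 x)"
  proof (intro sum.cong refl)
    fix k assume "k \<in> {..<n}"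
    have "(\<Sum>j=1..n-k. g j k) = (\<Sum>j=1..n-k. binom_shift k (a-2) * ((real (n-k-j) + 1) * sin (real j * x)))"
      unfolding g_def by (intro sum.cong refl) (simp add: add.commute)
    then show "(\<Sum>j=1..n-k. g j k) = binom_shift k (a-2) * S (n-k) 1 x"
      unfolding S1_form by (simp add: sum_distrib_left)
  qed
  finally show ?thesis .
qed

theorem theorem3p4:
  fixes a :: real
  shows "(\<forall>n::nat. \<forall>x::real. n \<ge> 1 \<longrightarrow> 0 < x \<longrightarrow> x < pi \<longrightarrow> S n a x > 0) \<longleftrightarrow> a \<ge> 1"
proof
  assume H: "\<forall>n::nat. \<forall>x::real. n \<ge> 1 \<longrightarrow> 0 < x \<longrightarrow> x < pi \<longrightarrow> S n a x > 0"
  show "a \<ge> 1"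
  proof (rule ccontr)
    assume "\<not> a \<ge> 1"
    define b where "b = (-a-1)/2"
    define t where "t = (-1 + min b 1) / 2"
    have bg: "b > -1" using \<open>\<not> a \<ge> 1\<close> unfolding b_def by simp
    have t1: "-1 < t" "t < 1" "t < b" using bg unfolding t_def by auto
    define x where "x = arccos t"
    have x: "0 < x" "x < pi" using arccos_lt_bounded[OF t1(1) t1(2)] unfolding x_def by auto
    have cx: "cos x = t" unfolding x_def using t1 by (simp add: cos_arccos)
    have sx: "sin x > 0" using x sin_gt_zero by auto
    have c1: "binom_shift (Suc 0) a = a + 1" by (simp add: binom_shift_def)
    have "S 2 a x = (a + 1) * sin x + sin (2 * x)"
      unfolding S_def by (simp add: numeral_2_eq_2 c1 c0)
    also have "\<dots> = sin x * (a + 1 + 2 * t)" using sin_double[of x] cx by (simp add: algebra_simps)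
    also have "\<dots> < 0"
    proof (rule mult_pos_neg)
      show "0 < sin x" by (rule sx)
      show "a + 1 + 2 * t < 0" using t1(3) unfolding b_def by (simp add: field_simps)
    qed
    finally have "S 2 a x < 0" .
    moreover have "S 2 a x > 0" using H[rule_format, of 2 x] x by simp
    ultimately show False by simp
  qed
next
  assume a: "a \<ge> 1"
  show "\<forall>n::nat. \<forall>x::real. n \<ge> 1 \<longrightarrow> 0 < x \<longrightarrow> x < pi \<longrightarrow> S n a x > 0"
  proof (intro allI impI)
    fix n :: nat and x :: real
    assume n: "n \<ge> 1" and x: "0 < x" "x < pi"
    have nn: "binom_shift k (a-2) \<ge> 0" for k
      unfolding binom_shift_def using a by (intro divide_nonneg_pos prod_nonneg) auto
    have tp: "0 \<le> binom_shift i (a-2) * S (n-i) 1 x" if "i \<in> {..<n}" for i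
    proof -
      have "n - i \<ge> 1" using that by auto
      then have "S (n-i) 1 x > 0" using F_pos x by blast
      then show ?thesis using nn[of i] by simp
    qed
    have "(\<Sum>k<n. binom_shift k (a-2) * S (n-k) 1 x) > 0"
    proof (rule sum_pos2[where i=0])
      show "0 \<in> {..<n}" using n by auto
      show "0 < binom_shift 0 (a-2) * S (n-0) 1 x" using F_pos[OF n x] by (simp add: c0)
      show "\<And>i. i\<in>{..<n} \<Longrightarrow> 0 \<le> binom_shift i (a-2) * S (n-i) 1 x"
        using tp by blast
    qed simp
    then show "S n a x > 0" by (subst conv[of n a x])
  qed
qed

end
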